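(* Let $\mathfrak l$ be a Lie algebra and let $S_1,S_2$ be subspaces of $\mathfrak l$ with $[S_1,S_2]\subseteq S_1+S_2$. For $i=1,2$ let $\mathfrak s_i$ be the subalgebra of $\mathfrak l$ generated by $S_i$. Then $[\mathfrak s_1,\mathfrak s_2]\subseteq\mathfrak s_1+\mathfrak s_2$; in particular $\mathfrak s_1+\mathfrak s_2$ is a subalgebra of $\mathfrak l$. *)

theory Defs
  imports Complex_Main
begin

definition lie_algebra :: "('k::field \<Rightarrow> 'v::ab_group_add \<Rightarrow> 'v) \<Rightarrow> ('v \<Rightarrow> 'v \<Rightarrow> 'v) \<Rightarrow> bool" where
  "lie_algebra scale br \<longleftrightarrow>
     vector_space scale \<and>
     (\<forall>x y z. br (x + y) z = br x z + br y z) \<and>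
     (\<forall>x y z. br x (y + z) = br x y + br x z) \<and>
     (\<forall>c x y. br (scale c x) y = scale c (br x y)) \<and>
     (\<forall>c x y. br x (scale c y) = scale c (br x y)) \<and>
     (\<forall>x. br x x = 0) \<and>
     (\<forall>x y z. br x (br y z) + br y (br z x) + br z (br x y) = 0)"

definition lie_subalgebra :: "('k::field \<Rightarrow> 'v::ab_group_add \<Rightarrow> 'v) \<Rightarrow> ('v \<Rightarrow> 'v \<Rightarrow> 'v) \<Rightarrow> 'v set \<Rightarrow> bool" where
  "lie_subalgebra scale br A \<longleftrightarrow>
     module.subspace scale A \<and> (\<forall>x\<in>A. \<forall>y\<in>A. br x y \<in> A)"

definition gen_subalgebra :: "('k::field \<Rightarrow> 'v::ab_group_add \<Rightarrow> 'v) \<Rightarrow> ('v \<Rightarrow> 'v \<Rightarrow> 'v) \<Rightarrow> 'v set \<Rightarrow> 'v set" where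
  "gen_subalgebra scale br S = \<Inter>{A. lie_subalgebra scale br A \<and> S \<subseteq> A}"

definition bracket_set :: "('k::field \<Rightarrow> 'v::ab_group_add \<Rightarrow> 'v) \<Rightarrow> ('v \<Rightarrow> 'v \<Rightarrow> 'v) \<Rightarrow> 'v set \<Rightarrow> 'v set \<Rightarrow> 'v set" where
  "bracket_set scale br A B = module.span scale {br a b | a b. a \<in> A \<and> b \<in> B}"

definition set_plus :: "'v::ab_group_add set \<Rightarrow> 'v set \<Rightarrow> 'v set" where
  "set_plus A B = {a + b | a b. a \<in> A \<and> b \<in> B}"

end

theory Submission
  imports Defs
begin

locale lie_ctx =
  fixes scale :: "'k::field \<Rightarrow> 'v::ab_group_add \<Rightarrow> 'v"
    and br :: "'v \<Rightarrow> 'v \<Rightarrow> 'v"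
  assumes L: "lie_algebra scale br"
begin

lemma vs: "vector_space scale" using L unfolding lie_algebra_def by blast

sublocale module scale using vs by (simp add: vector_space_def module_def)

lemma addl: "br (x + y) z = br x z + br y z" using L unfolding lie_algebra_def by blast
lemma addr: "br x (y + z) = br x y + br x z" using L unfolding lie_algebra_def by blast
lemma alt: "br x x = 0" using L unfolding lie_algebra_def by blast
lemma jac: "br x (br y z) + br y (br z x) + br z (br x y) = 0" using L unfolding lie_algebra_def by blast

lemma zl: "br 0 x = 0" using addl[of 0 0 x] by simp
lemma zr: "br x 0 = 0" using addr[of x 0 0] by simp
lemma anti: "br x y = - br y x"
proof -
  have e: "br (x+y) (x+y) = br x x + br x y + (br y x + br y y)" by (simp only: addl addr add_ac)
  have "br x y + br y x = 0" using e unfolding alt by simp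
  then show ?thesis by (simp add: eq_neg_iff_add_eq_0)
qed
lemma negr: "br x (- y) = - br x y"
  using addr[of x y "-y"] zr by (simp add: eq_neg_iff_add_eq_0 add.commute)
lemma diffr: "br x (y - z) = br x y - br x z"
  using addr[of x y "-z"] negr by simp
lemma grp_aux: "(a::'a::ab_group_add) + b + c = 0 \<Longrightarrow> c = - d \<Longrightarrow> b = - e \<Longrightarrow> d = a - e"
proof -
  assume h: "a + b + c = 0" "c = - d" "b = - e"
  have "d = d + (a + b + c)" using h(1) by simp
  also have "\<dots> = a - e" using h(2,3) by (simp add: algebra_simps)
  finally show ?thesis .
qed
lemma jac2: "br (br x y) z = br x (br y z) - br y (br x z)"
proof -
  have 1: "br z (br x y) = - br (br x y) z" by (rule anti)
  have 2: "br y (br z x) = - br y (br x z)" by (subst anti[of z x]) (rule negr)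
  show ?thesis by (rule grp_aux[OF jac[of x y z] 1 2])
qed

lemma sub_plus: assumes A: "subspace A" and B: "subspace B" shows "subspace (set_plus A B)"
proof (rule subspaceI)
  show "0 \<in> set_plus A B" unfolding set_plus_def mem_Collect_eq
    by (rule exI[of _ 0], rule exI[of _ 0]) (simp add: subspace_0 A B)
next
  fix x y assume "x \<in> set_plus A B" "y \<in> set_plus A B"
  then obtain a b a' b' where ab: "x = a + b" "a \<in> A" "b \<in> B" "y = a' + b'" "a' \<in> A" "b' \<in> B"
    unfolding set_plus_def by blast
  have "x + y = (a + a') + (b + b')" using ab by (simp add: algebra_simps)
  moreover have "a + a' \<in> A" "b + b' \<in> B" using ab subspace_add A B by blast+
  ultimately show "x + y \<in> set_plus A B" unfolding set_plus_def by blast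
next
  fix c x assume "x \<in> set_plus A B"
  then obtain a b where ab: "x = a + b" "a \<in> A" "b \<in> B"
    unfolding set_plus_def by blast
  have "scale c x = scale c a + scale c b" using ab by (simp add: scale_right_distrib)
  moreover have "scale c a \<in> A" "scale c b \<in> B" using ab subspace_scale A B by blast+
  ultimately show "scale c x \<in> set_plus A B" unfolding set_plus_def by blast
qed

lemma gen_sub: "lie_subalgebra scale br (gen_subalgebra scale br S)"
  unfolding lie_subalgebra_def gen_subalgebra_def
  by (auto intro!: subspace_Inter simp: lie_subalgebra_def)

lemma gen_sup: "S \<subseteq> gen_subalgebra scale br S"
  unfolding gen_subalgebra_def by auto

lemma gen_min: "lie_subalgebra scale br A \<Longrightarrow> S \<subseteq> A \<Longrightarrow> gen_subalgebra scale br S \<subseteq> A"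
  unfolding gen_subalgebra_def by auto

lemma gen_subspace: "subspace (gen_subalgebra scale br S)"
  using gen_sub unfolding lie_subalgebra_def by blast
lemma gen_br: "x \<in> gen_subalgebra scale br S \<Longrightarrow> y \<in> gen_subalgebra scale br S \<Longrightarrow> br x y \<in> gen_subalgebra scale br S"
  using gen_sub unfolding lie_subalgebra_def by blast

lemma plus_in: "a \<in> A \<Longrightarrow> b \<in> B \<Longrightarrow> a + b \<in> set_plus A B"
  unfolding set_plus_def by blast

lemma plus_mono: "A \<subseteq> A' \<Longrightarrow> B \<subseteq> B' \<Longrightarrow> set_plus A B \<subseteq> set_plus A' B'"
  unfolding set_plus_def by blast

lemma scale_br: "br (scale c x) y = scale c (br x y)" "br x (scale c y) = scale c (br x y)"
  using L unfolding lie_algebra_def by blast+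

lemma inA: "subspace B \<Longrightarrow> a \<in> A \<Longrightarrow> a \<in> set_plus A B"
  using plus_in[of a A 0 B] subspace_0 by simp
lemma inB: "subspace A \<Longrightarrow> b \<in> B \<Longrightarrow> b \<in> set_plus A B"
  using plus_in[of 0 A b B] subspace_0 by simp

lemma helper1:
  assumes A: "lie_subalgebra scale br A" and B: "subspace B" and x: "x \<in> A"
    and h: "\<forall>z\<in>B. br x z \<in> set_plus A B" and w: "w \<in> set_plus A B"
  shows "br x w \<in> set_plus A B"
proof -
  have As: "subspace A" using A unfolding lie_subalgebra_def by blast
  obtain a b where ab: "w = a + b" "a \<in> A" "b \<in> B" using w unfolding set_plus_def by blast
  have "br x a \<in> A" using A x ab unfolding lie_subalgebra_def by blast
  then have "br x a \<in> set_plus A B" using inA B by blast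
  moreover have "br x b \<in> set_plus A B" using h ab by blast
  ultimately have "br x a + br x b \<in> set_plus A B" using subspace_add sub_plus[OF As B] by blast
  then show ?thesis using ab(1) by (simp add: addr)
qed

lemma helper2:
  assumes A: "subspace A" and B: "lie_subalgebra scale br B" and y: "y \<in> B"
    and h: "\<forall>x\<in>A. br x y \<in> set_plus A B" and w: "w \<in> set_plus A B"
  shows "br w y \<in> set_plus A B"
proof -
  have Bs: "subspace B" using B unfolding lie_subalgebra_def by blast
  obtain a b where ab: "w = a + b" "a \<in> A" "b \<in> B" using w unfolding set_plus_def by blast
  have "br b y \<in> B" using B y ab unfolding lie_subalgebra_def by blast
  then have "br b y \<in> set_plus A B" using inB A by blast
  moreover have "br a y \<in> set_plus A B" using h ab by blast
  ultimately have "br a y + br b y \<in> set_plus A B" using subspace_add sub_plus[OF A Bs] by blast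
  then show ?thesis using ab(1) by (simp add: addl)
qed

lemma claim1:
  assumes S1: "subspace S1" and S2: "subspace S2"
    and h: "bracket_set scale br S1 S2 \<subseteq> set_plus S1 S2"
  shows "\<forall>x\<in>gen_subalgebra scale br S1. \<forall>z\<in>S2. br x z \<in> set_plus (gen_subalgebra scale br S1) S2"
proof -
  define s1 where "s1 = gen_subalgebra scale br S1"
  define P where "P = set_plus s1 S2"
  have s1: "lie_subalgebra scale br s1" unfolding s1_def by (rule gen_sub)
  have s1s: "subspace s1" using s1 unfolding lie_subalgebra_def by blast
  have Ps: "subspace P" unfolding P_def by (rule sub_plus[OF s1s S2])
  define T where "T = {x \<in> s1. \<forall>z\<in>S2. br x z \<in> P}"
  have "lie_subalgebra scale br T"
    unfolding lie_subalgebra_def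
  proof
    show "subspace T"
    proof (rule subspaceI)
      show "0 \<in> T" unfolding T_def using subspace_0[OF s1s] subspace_0[OF Ps] by (simp add: zl)
      fix x y assume "x \<in> T" "y \<in> T"
      then show "x + y \<in> T" unfolding T_def using subspace_add[OF s1s] subspace_add[OF Ps]
        by (simp add: addl)
    next
      fix c x assume "x \<in> T"
      then show "scale c x \<in> T" unfolding T_def using subspace_scale[OF s1s] subspace_scale[OF Ps]
        by (simp add: scale_br)
    qed
    show "\<forall>x\<in>T. \<forall>y\<in>T. br x y \<in> T"
    proof (intro ballI)
      fix x y assume x: "x \<in> T" and y: "y \<in> T"
      have "br x y \<in> s1" using x y s1 unfolding T_def lie_subalgebra_def by blast
      moreover have "\<forall>z\<in>S2. br (br x y) z \<in> P"
      proof
        fix z assume z: "z \<in> S2"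
        have "br x (br y z) \<in> P" using helper1[OF s1 S2, of x "br y z"] x y z unfolding T_def P_def by blast
        moreover have "br y (br x z) \<in> P" using helper1[OF s1 S2, of y "br x z"] x y z unfolding T_def P_def by blast
        ultimately have "br x (br y z) - br y (br x z) \<in> P" using subspace_diff[OF Ps] by blast
        then show "br (br x y) z \<in> P" by (simp add: jac2)
      qed
      ultimately show "br x y \<in> T" unfolding T_def by blast
    qed
  qed
  moreover have "S1 \<subseteq> T"
  proof
    fix x assume x: "x \<in> S1"
    have "x \<in> s1" using x gen_sup unfolding s1_def by blast
    moreover have "\<forall>z\<in>S2. br x z \<in> P"
    proof
      fix z assume "z \<in> S2"
      then have "br x z \<in> {br a b | a b. a \<in> S1 \<and> b \<in> S2}" using x by blast
      then have "br x z \<in> bracket_set scale br S1 S2" unfolding bracket_set_def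
        by (rule subsetD[OF span_superset])
      then have "br x z \<in> set_plus S1 S2" using h by blast
      moreover have "set_plus S1 S2 \<subseteq> P" unfolding P_def s1_def by (rule plus_mono[OF gen_sup]) simp
      ultimately show "br x z \<in> P" by blast
    qed
    ultimately show "x \<in> T" unfolding T_def by blast
  qed
  ultimately have "s1 \<subseteq> T" unfolding s1_def by (rule gen_min)
  then show ?thesis unfolding T_def P_def s1_def by blast
qed

lemma claim2:
  assumes S1: "subspace S1" and S2: "subspace S2"
    and h: "bracket_set scale br S1 S2 \<subseteq> set_plus S1 S2"
  shows "\<forall>x\<in>gen_subalgebra scale br S1. \<forall>y\<in>gen_subalgebra scale br S2.
           br x y \<in> set_plus (gen_subalgebra scale br S1) (gen_subalgebra scale br S2)"
proof -
  define s1 where "s1 = gen_subalgebra scale br S1"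
  define s2 where "s2 = gen_subalgebra scale br S2"
  define P where "P = set_plus s1 s2"
  have c1: "\<forall>x\<in>s1. \<forall>z\<in>S2. br x z \<in> set_plus s1 S2" using claim1[OF S1 S2 h] unfolding s1_def .
  have s1: "lie_subalgebra scale br s1" unfolding s1_def by (rule gen_sub)
  have s1s: "subspace s1" using s1 unfolding lie_subalgebra_def by blast
  have s2: "lie_subalgebra scale br s2" unfolding s2_def by (rule gen_sub)
  have s2s: "subspace s2" using s2 unfolding lie_subalgebra_def by blast
  have Ps: "subspace P" unfolding P_def by (rule sub_plus[OF s1s s2s])
  define U where "U = {y \<in> s2. \<forall>x\<in>s1. br x y \<in> P}"
  have "lie_subalgebra scale br U"
    unfolding lie_subalgebra_def
  proof
    show "subspace U"
    proof (rule subspaceI)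
      show "0 \<in> U" unfolding U_def using subspace_0[OF s2s] subspace_0[OF Ps] by (simp add: zr)
      fix x y assume "x \<in> U" "y \<in> U"
      then show "x + y \<in> U" unfolding U_def using subspace_add[OF s2s] subspace_add[OF Ps]
        by (simp add: addr)
    next
      fix c x assume "x \<in> U"
      then show "scale c x \<in> U" unfolding U_def using subspace_scale[OF s2s] subspace_scale[OF Ps]
        by (simp add: scale_br)
    qed
    show "\<forall>x\<in>U. \<forall>y\<in>U. br x y \<in> U"
    proof (intro ballI)
      fix y y' assume y: "y \<in> U" and y': "y' \<in> U"
      have "br y y' \<in> s2" using y y' s2 unfolding U_def lie_subalgebra_def by blast
      moreover have "\<forall>x\<in>s1. br x (br y y') \<in> P"
      proof
        fix x assume x: "x \<in> s1"
        have "br (br x y) y' \<in> P" using helper2[OF s1s s2, of y' "br x y"] x y y' unfolding U_def P_def by blast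
        moreover have "br (br x y') y \<in> P" using helper2[OF s1s s2, of y "br x y'"] x y y' unfolding U_def P_def by blast
        then have "- br (br x y') y \<in> P" using subspace_neg[OF Ps] by blast
        then have "br y (br x y') \<in> P" by (simp add: anti[of y])
        ultimately have "br (br x y) y' + br y (br x y') \<in> P" using subspace_add[OF Ps] by blast
        moreover have "br (br x y) y' + br y (br x y') = br x (br y y')" using jac2[of x y y'] by simp
        ultimately show "br x (br y y') \<in> P" by simp
      qed
      ultimately show "br y y' \<in> U" unfolding U_def by blast
    qed
  qed
  moreover have "S2 \<subseteq> U"
  proof
    fix y assume y: "y \<in> S2"
    have "y \<in> s2" using y gen_sup unfolding s2_def by blast
    moreover have "set_plus s1 S2 \<subseteq> P" unfolding P_def s2_def by (rule plus_mono[OF _ gen_sup]) simp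
    ultimately show "y \<in> U" unfolding U_def using c1 y by blast
  qed
  ultimately have "s2 \<subseteq> U" unfolding s2_def by (rule gen_min)
  then show ?thesis unfolding U_def P_def s1_def s2_def by blast
qed

end

theorem lemma1p4:
  fixes scale :: "'k::field \<Rightarrow> 'v::ab_group_add \<Rightarrow> 'v"
    and br :: "'v \<Rightarrow> 'v \<Rightarrow> 'v"
    and S1 S2 :: "'v set"
  assumes "lie_algebra scale br"
    and "module.subspace scale S1"
    and "module.subspace scale S2"
    and "bracket_set scale br S1 S2 \<subseteq> set_plus S1 S2"
  shows "bracket_set scale br (gen_subalgebra scale br S1) (gen_subalgebra scale br S2)
           \<subseteq> set_plus (gen_subalgebra scale br S1) (gen_subalgebra scale br S2)
         \<and> lie_subalgebra scale br (set_plus (gen_subalgebra scale br S1) (gen_subalgebra scale br S2))"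
proof -
  interpret lie_ctx scale br by standard (rule assms(1))
  define s1 where "s1 = gen_subalgebra scale br S1"
  define s2 where "s2 = gen_subalgebra scale br S2"
  have c2: "\<forall>x\<in>s1. \<forall>y\<in>s2. br x y \<in> set_plus s1 s2"
    using claim2[OF assms(2-4)] unfolding s1_def s2_def .
  have s1s: "subspace s1" using gen_sub unfolding s1_def lie_subalgebra_def by blast
  have s2s: "subspace s2" using gen_sub unfolding s2_def lie_subalgebra_def by blast
  have Ps: "subspace (set_plus s1 s2)" by (rule sub_plus[OF s1s s2s])
  have b1: "\<forall>x\<in>s1. \<forall>y\<in>s1. br x y \<in> s1" using gen_sub unfolding s1_def lie_subalgebra_def by blast
  have b2: "\<forall>x\<in>s2. \<forall>y\<in>s2. br x y \<in> s2" using gen_sub unfolding s2_def lie_subalgebra_def by blast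
  have "bracket_set scale br s1 s2 \<subseteq> set_plus s1 s2"
    unfolding bracket_set_def by (rule span_minimal[OF _ Ps]) (use c2 in blast)
  moreover have "lie_subalgebra scale br (set_plus s1 s2)"
    unfolding lie_subalgebra_def
  proof (intro conjI Ps ballI)
    fix u v assume "u \<in> set_plus s1 s2" "v \<in> set_plus s1 s2"
    then obtain a b a' b' where ab: "u = a + b" "a \<in> s1" "b \<in> s2" "v = a' + b'" "a' \<in> s1" "b' \<in> s2"
      unfolding set_plus_def by blast
    have "br a a' \<in> set_plus s1 s2" using b1 ab inA[OF s2s] by blast
    moreover have "br a b' \<in> set_plus s1 s2" using c2 ab by blast
    moreover have "- br a' b \<in> set_plus s1 s2" using c2 ab subspace_neg[OF Ps] by blast
    then have "br b a' \<in> set_plus s1 s2" by (simp add: anti[of b])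
    moreover have "br b b' \<in> set_plus s1 s2" using b2 ab inB[OF s1s] by blast
    moreover have "br u v = (br a a' + br a b') + (br b a' + br b b')" using ab by (simp add: addl addr)
    ultimately show "br u v \<in> set_plus s1 s2" using subspace_add[OF Ps] by simp
  qed
  ultimately show ?thesis unfolding s1_def s2_def by blast
qed

end
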